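(* For $0<\theta<\pi$ and $\epsilon>0$ let $\Gamma_\theta=\{re^{i\alpha}: r>0,\ \pi-\theta<\alpha<\pi+\theta\}$ and $\Gamma_\theta^\epsilon=\Gamma_\theta\cap\{|z|<\epsilon\}$. Let $0<\theta_1<\theta_2<\pi$ and let $z_j=r_je^{i(\pi+\alpha_j)}$ with $r_j>0$, $-\theta_1<\alpha_j<\theta_1$, be a sequence with $z_j\to0$ and $\alpha_j\to\alpha$ where $|\alpha|<\theta_1$. Then for any $\epsilon_1,\epsilon_2>0$, $$\lim_{j\to\infty}\frac{M_{\Gamma^{\epsilon_1}_{\theta_1}}(z_j)}{M_{\Gamma^{\epsilon_2}_{\theta_2}}(z_j)}=\left(\frac{\theta_2\cos\frac{\alpha\pi}{2\theta_2}}{\theta_1\cos\frac{\alpha\pi}{2\theta_1}}\right)^2,$$ where $M$ denotes either the Eisenman-Kobayashi measure $M^E$ or the Carathéodory measure $M^C$ (in dimension one).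
   Context: Let $\Delta$ be the unit disc, $\Delta^n$ the unit polydisc, and $H(D_1,D_2)$ the holomorphic maps $D_1\to D_2$; $f'(z)$ denotes the complex Jacobian matrix. For a bounded domain $D\subset\mathbb{C}^n$, the Eisenman-Kobayashi measure is $M^E_D(z)=\inf\{|\det f'(0)|^{-2}: f\in H(\Delta^n,D), f(0)=z\}$ and the Carathéodory measure is $M^C_D(z)=\sup\{|\det f'(z)|^2: f\in H(D,\Delta^n), f(z)=0\}$. *)

theory Defs
  imports "HOL-Complex_Analysis.Complex_Analysis"
begin

text \<open>Maps with f'(0) = 0 would contribute the value +infinity, which never affects the
  infimum, so they are excluded (in HOL inverse 0 = 0).\<close>
definition EK_measure :: "complex set \<Rightarrow> complex \<Rightarrow> real" where
  "EK_measure D z = Inf {(cmod (deriv f 0)) powi (-2) | f.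
       f holomorphic_on ball 0 1 \<and> f ` ball 0 1 \<subseteq> D \<and> f 0 = z \<and> deriv f 0 \<noteq> 0}"

definition Car_measure :: "complex set \<Rightarrow> complex \<Rightarrow> real" where
  "Car_measure D z = Sup {(cmod (deriv f z))^2 | f.
       f holomorphic_on D \<and> f ` D \<subseteq> ball 0 1 \<and> f z = 0}"

definition sector :: "real \<Rightarrow> complex set" where
  "sector \<theta> = {complex_of_real r * exp (\<i> * complex_of_real a) | r a.
       r > 0 \<and> pi - \<theta> < a \<and> a < pi + \<theta>}"

definition trunc_sector :: "real \<Rightarrow> real \<Rightarrow> complex set" where
  "trunc_sector \<theta> \<epsilon> = sector \<theta> \<inter> ball 0 \<epsilon>"

end

theory Submission
  imports Defs
begin


lemma L1:
  assumes "r > 0"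
  shows "-(complex_of_real r * exp (\<i> * complex_of_real (pi + a))) = exp (Complex (ln r) a)"
proof -
  have c: "Complex (ln r) a = complex_of_real (ln r) + \<i> * complex_of_real a"
    by (simp add: complex_eq_iff)
  have "exp (Complex (ln r) a) = complex_of_real r * exp (\<i> * complex_of_real a)"
    unfolding c exp_add using assms by (simp add: exp_of_real)
  moreover have "exp (\<i> * complex_of_real (pi + a)) = - exp (\<i> * complex_of_real a)"
    by (simp add: distrib_left exp_add)
  ultimately show ?thesis by simp
qed

lemma L2:
  assumes "r > 0" "-pi < a" "a \<le> pi"
  shows "Ln (-(complex_of_real r * exp (\<i> * complex_of_real (pi + a)))) = Complex (ln r) a"
  unfolding L1[OF assms(1)] using assms by (intro Ln_exp) auto

lemma L3:
  assumes "0 < \<theta>" "\<theta> < pi"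
  shows "z \<in> sector \<theta> \<longleftrightarrow> z \<noteq> 0 \<and> \<bar>Im (Ln (-z))\<bar> < \<theta>"
proof
  assume "z \<in> sector \<theta>"
  then obtain r b where rb: "z = complex_of_real r * exp (\<i> * complex_of_real b)" "r > 0" "pi - \<theta> < b" "b < pi + \<theta>"
    unfolding sector_def by blast
  define a where "a = b - pi"
  have z: "z = complex_of_real r * exp (\<i> * complex_of_real (pi + a))" using rb a_def by simp
  have "Ln (-z) = Complex (ln r) a" unfolding z using rb assms a_def by (intro L2) auto
  moreover have "z \<noteq> 0" using z rb by simp
  ultimately show "z \<noteq> 0 \<and> \<bar>Im (Ln (-z))\<bar> < \<theta>" using rb a_def by auto
next
  assume h: "z \<noteq> 0 \<and> \<bar>Im (Ln (-z))\<bar> < \<theta>"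
  define L where "L = Ln (-z)"
  have "exp L = -z" using h L_def by simp
  hence "z = - exp L" by simp
  also have "\<dots> = complex_of_real (exp (Re L)) * exp (\<i> * complex_of_real (pi + Im L))"
    using L1[of "exp (Re L)" "Im L"] by (metis exp_gt_zero ln_exp complex_surj minus_minus)
  finally show "z \<in> sector \<theta>" unfolding sector_def using h L_def
    by (intro CollectI exI[of _ "exp (Re L)"] exI[of _ "pi + Im L"]) auto
qed

lemma L4:
  assumes "0 < \<theta>" "\<theta> < pi" "z \<in> sector \<theta>"
  shows "-z \<notin> \<real>\<^sub>\<le>\<^sub>0"
proof
  assume "-z \<in> \<real>\<^sub>\<le>\<^sub>0"
  moreover have "z \<noteq> 0" "\<bar>Im (Ln (-z))\<bar> < \<theta>" using L3 assms by auto
  ultimately have "Im (Ln (-z)) = pi"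
    by (subst Im_Ln_eq_pi) (auto simp: complex_nonpos_Reals_iff complex_eq_iff)
  thus False using \<open>\<bar>Im (Ln (-z))\<bar> < \<theta>\<close> assms by simp
qed

lemma L5:
  assumes "0 < \<theta>" "\<theta> < pi"
  shows "open (sector \<theta>)"
proof -
  define S where "S = {z::complex. -z \<notin> \<real>\<^sub>\<le>\<^sub>0}"
  have oS: "open S"
  proof -
    have "S = uminus -` (- \<real>\<^sub>\<le>\<^sub>0)" unfolding S_def by auto
    moreover have "open (uminus -` (- \<real>\<^sub>\<le>\<^sub>0) :: complex set)"
      by (intro open_vimage continuous_intros) (simp add: open_Compl closed_nonpos_Reals_complex)
    ultimately show ?thesis by simp
  qed
  have c: "continuous_on S (\<lambda>z. Im (Ln (-z)))"
    unfolding S_def by (intro continuous_intros) auto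
  have "open (S \<inter> (\<lambda>z. Im (Ln (-z))) -` {-\<theta><..<\<theta>})"
    by (rule continuous_open_preimage[OF c oS]) auto
  moreover have "S \<inter> (\<lambda>z. Im (Ln (-z))) -` {-\<theta><..<\<theta>} = sector \<theta>"
    using L3[OF assms] L4[OF assms] unfolding S_def by (auto simp: abs_less_iff)
  ultimately show ?thesis by simp
qed

lemma L6:
  assumes "-z \<notin> \<real>\<^sub>\<le>\<^sub>0"
  shows "((\<lambda>x. exp (complex_of_real p * Ln (-x))) has_field_derivative
           (exp (complex_of_real p * Ln (-z)) * complex_of_real p / z)) (at z)"
proof -
  have z0: "z \<noteq> 0" using assms by auto
  have d1: "((\<lambda>x. Ln (-x)) has_field_derivative (inverse (-z) * -1)) (at z)"
    by (rule DERIV_chain2[where f=Ln and g="\<lambda>x. -x", OF has_field_derivative_Ln[OF assms]]) (auto intro!: derivative_eq_intros)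
  have "((\<lambda>x. exp (complex_of_real p * Ln (-x))) has_field_derivative
           (exp (complex_of_real p * Ln (-z)) * (complex_of_real p * (inverse (-z) * -1)))) (at z)"
    by (rule DERIV_chain2[OF DERIV_exp DERIV_cmult[OF d1]])
  then show ?thesis by (rule DERIV_cong) (use z0 in \<open>simp add: field_simps\<close>)
qed

lemma L7:
  assumes "0 < \<theta>" "\<theta> < pi" "x \<in> sector \<theta>"
  shows "Re (exp (complex_of_real (pi / (2 * \<theta>)) * Ln (-x))) > 0"
proof -
  have h: "\<bar>Im (Ln (-x))\<bar> < \<theta>" using L3[OF assms(1,2)] assms(3) by auto
  have p0: "pi / (2 * \<theta>) > 0" using assms by simp
  have "\<bar>pi / (2 * \<theta>) * Im (Ln (-x))\<bar> = pi / (2 * \<theta>) * \<bar>Im (Ln (-x))\<bar>"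
    using p0 assms(1) by (simp add: abs_mult)
  also have "\<dots> < pi / (2 * \<theta>) * \<theta>"
    by (rule mult_strict_left_mono[OF h p0])
  also have "\<dots> = pi / 2" using assms by simp
  finally have hh: "\<bar>pi / (2 * \<theta>) * Im (Ln (-x))\<bar> < pi / 2" .
  have "- (pi / 2) < pi / (2 * \<theta>) * Im (Ln (-x))" "pi / (2 * \<theta>) * Im (Ln (-x)) < pi / 2"
    using hh by arith+
  then have "cos (pi / (2 * \<theta>) * Im (Ln (-x))) > 0"
    by (rule cos_gt_zero_pi)
  then show ?thesis by (simp add: Re_exp)
qed

lemma L8:
  fixes u v :: complex
  assumes "Re u > 0" "Re v > 0"
  shows "cmod (u - v) < cmod (u + cnj v)"
proof -
  have "(cmod (u - v))^2 < (cmod (u + cnj v))^2"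
    using mult_pos_pos[OF assms] unfolding cmod_power2 by (simp add: power2_eq_square algebra_simps)
  then show ?thesis by (rule power2_less_imp_less) simp
qed

lemma L_open_trunc:
  assumes "0 < \<theta>" "\<theta> < pi"
  shows "open (trunc_sector \<theta> \<epsilon>)"
  unfolding trunc_sector_def using L5[OF assms] by (intro open_Int) auto

lemma L_pt:
  assumes "0 < \<theta>" "\<theta> < pi" "0 < r" "\<bar>a\<bar> < \<theta>"
    and z: "z = complex_of_real r * exp (\<i> * complex_of_real (pi + a))"
  shows "Ln (-z) = Complex (ln r) a" "z \<in> sector \<theta>" "cmod z = r"
proof -
  show L: "Ln (-z) = Complex (ln r) a" unfolding z using assms by (intro L2) auto
  have "z \<noteq> 0" using z assms by simp
  then show "z \<in> sector \<theta>" using L3[OF assms(1,2)] L assms by simp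
  show "cmod z = r" using z assms by (simp add: norm_mult)
qed

lemma aux_div: "(A::complex) \<noteq> 0 \<Longrightarrow> (X * A - (B - B) * X) / (A * A) = X / A"
  by simp

lemma L9:
  assumes th: "0 < \<theta>" "\<theta> < pi" and r: "0 < r" "r < \<epsilon>" and a: "\<bar>a\<bar> < \<theta>"
    and z: "z = complex_of_real r * exp (\<i> * complex_of_real (pi + a))"
    and p: "p = pi / (2 * \<theta>)"
  shows "\<exists>f. f holomorphic_on trunc_sector \<theta> \<epsilon> \<and> f ` trunc_sector \<theta> \<epsilon> \<subseteq> ball 0 1 \<and> f z = 0
           \<and> cmod (deriv f z) = p / (2 * r * cos (p * a))"
proof -
  define W where "W x = exp (complex_of_real p * Ln (-x))" for x
  define w0 where "w0 = W z"
  note pt = L_pt[OF th r(1) a z]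
  have e: "complex_of_real p * Complex (ln r) a = Complex (p * ln r) (p * a)"
    by (simp add: complex_eq_iff)
  have w0: "w0 = exp (Complex (p * ln r) (p * a))"
    unfolding w0_def W_def pt(1) e ..
  have Rew0: "Re w0 = exp (p * ln r) * cos (p * a)" unfolding w0 by (simp add: Re_exp)
  have nw0: "cmod w0 = exp (p * ln r)" unfolding w0 by simp
  have ReW: "Re (W x) > 0" if "x \<in> sector \<theta>" for x
    unfolding W_def p using L7[OF th that] .
  have Rew0p: "Re w0 > 0" unfolding w0_def using ReW[OF pt(2)] .
  define f where "f x = (W x - w0) / (W x + cnj w0)" for x
  have den: "W x + cnj w0 \<noteq> 0" if "x \<in> sector \<theta>" for x
  proof
    assume "W x + cnj w0 = 0"
    then have "Re (W x + cnj w0) = 0" by simp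
    then show False using ReW[OF that] Rew0p by simp
  qed
  have DW: "(W has_field_derivative (W x * complex_of_real p / x)) (at x)" if "x \<in> sector \<theta>" for x
    unfolding W_def using L6[OF L4[OF th that]] .
  have Df: "(f has_field_derivative
      ((W x * complex_of_real p / x) * (W x + cnj w0) - (W x - w0) * (W x * complex_of_real p / x))
        / ((W x + cnj w0) * (W x + cnj w0))) (at x)" if "x \<in> sector \<theta>" for x
    unfolding f_def
    by (rule DERIV_cong, rule DERIV_divide[OF DERIV_diff[OF DW[OF that] DERIV_const] DERIV_add[OF DW[OF that] DERIV_const]
          den[OF that]]) simp
  have hol: "f holomorphic_on trunc_sector \<theta> \<epsilon>"
    using L_open_trunc[OF th] Df unfolding trunc_sector_def
    by (subst holomorphic_on_open) (auto simp: trunc_sector_def)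
  have img: "f ` trunc_sector \<theta> \<epsilon> \<subseteq> ball 0 1"
  proof
    fix y assume "y \<in> f ` trunc_sector \<theta> \<epsilon>"
    then obtain x where x: "x \<in> sector \<theta>" "y = f x" unfolding trunc_sector_def by auto
    have "cmod (W x - w0) < cmod (W x + cnj w0)" by (rule L8[OF ReW[OF x(1)] Rew0p])
    then show "y \<in> ball 0 1" using x den[OF x(1)] by (simp add: f_def norm_divide divide_less_eq)
  qed
  have fz: "f z = 0" unfolding f_def w0_def by simp
  have "deriv f z = ((W z * complex_of_real p / z) * (W z + cnj w0) - (W z - w0) * (W z * complex_of_real p / z))
        / ((W z + cnj w0) * (W z + cnj w0))"
    by (rule DERIV_imp_deriv[OF Df[OF pt(2)]])
  also have "\<dots> = (w0 * complex_of_real p / z) / (w0 + cnj w0)"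
    using den[OF pt(2)] unfolding w0_def[symmetric] by (rule aux_div)
  also have "\<dots> = (w0 * complex_of_real p / z) / complex_of_real (2 * Re w0)"
    by (simp add: complex_add_cnj)
  finally have "cmod (deriv f z) = cmod w0 * p / r / (2 * Re w0)"
    using pt(3) th Rew0p by (simp add: norm_divide norm_mult p)
  also have "\<dots> = p / (2 * r * cos (p * a))"
    unfolding nw0 Rew0 by simp
  finally show ?thesis using hol img fz by blast
qed



lemma L11:
  assumes D: "open D" and f: "f holomorphic_on D" "f ` D \<subseteq> ball 0 1" "f z = 0"
    and g: "g holomorphic_on ball 0 1" "g ` ball 0 1 \<subseteq> D" "g 0 = z"
  shows "cmod (deriv f z) * cmod (deriv g 0) \<le> 1"
proof -
  have "(0::complex) \<in> ball 0 1" by simp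
  then have zD: "z \<in> D" using g(2,3) by blast
  have hol: "(f \<circ> g) holomorphic_on ball 0 1" by (rule holomorphic_on_compose_gen[OF g(1) f(1) g(2)])
  have h0: "(f \<circ> g) 0 = 0" using f g by simp
  have hb: "norm ((f \<circ> g) w) < 1" if "norm w < 1" for w
  proof -
    have "w \<in> ball 0 1" using that by simp
    then have "g w \<in> D" using g(2) by blast
    then have "f (g w) \<in> ball 0 1" using f(2) by blast
    then show ?thesis by simp
  qed
  have "norm (deriv (f \<circ> g) 0) \<le> 1" by (rule Schwarz_Lemma(2)[OF hol h0 hb, of 0]) auto
  moreover have "deriv (f \<circ> g) 0 = deriv f z * deriv g 0"
  proof -
    have df: "(f has_field_derivative deriv f (g 0)) (at (g 0))"
      using holomorphic_derivI[OF f(1) D zD] g(3) by simp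
    have dg: "(g has_field_derivative deriv g 0) (at 0)"
      by (rule holomorphic_derivI[OF g(1)]) auto
    have "((\<lambda>x. f (g x)) has_field_derivative deriv f (g 0) * deriv g 0) (at 0)"
      by (rule DERIV_chain2[OF df dg])
    then show ?thesis using g(3) by (simp add: o_def DERIV_imp_deriv)
  qed
  ultimately show ?thesis by (simp add: norm_mult)
qed


lemma L10:
  assumes th: "0 < \<theta>" "\<theta> < pi" and r: "0 < r" and a: "\<bar>a\<bar> < \<theta>" and e: "\<epsilon> > 0"
    and z: "z = complex_of_real r * exp (\<i> * complex_of_real (pi + a))"
    and p: "p = pi / (2 * \<theta>)" and t: "t = \<epsilon> powr p / 2" and rho: "\<rho> = r powr p"
    and small: "\<rho> < 2 * t * cos (p * a)"
  shows "\<exists>g. g holomorphic_on ball 0 1 \<and> g ` ball 0 1 \<subseteq> trunc_sector \<theta> \<epsilon> \<and> g 0 = z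
           \<and> deriv g 0 \<noteq> 0 \<and> cmod (deriv g 0) = r * (2 * cos (p * a) - \<rho> / t) / p"
proof -
  have p0: "p > 0" using p th by simp
  have "\<epsilon> powr p > 0" using e by simp
  then have t0: "t > 0" using t by linarith
  have rho_eq: "\<rho> = exp (p * ln r)" using rho r by (simp add: powr_def mult.commute)
  have rho0: "\<rho> > 0" using rho_eq by simp
  define w0 where "w0 = exp (Complex (p * ln r) (p * a))"
  have Rew0: "Re w0 = \<rho> * cos (p * a)" unfolding w0_def rho_eq by (simp add: Re_exp)
  have nw0: "cmod w0 = \<rho>" unfolding w0_def rho_eq by simp
  have pa: "\<bar>p * a\<bar> < pi / 2"
  proof -
    have "\<bar>p * a\<bar> = p * \<bar>a\<bar>" using p0 by (simp add: abs_mult)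
    also have "\<dots> < p * \<theta>" by (rule mult_strict_left_mono[OF a p0])
    also have "\<dots> = pi / 2" using p th by simp
    finally show ?thesis .
  qed
  have cos0: "cos (p * a) > 0" using pa by (intro cos_gt_zero_pi) arith+
  define b where "b = (w0 - t) / t"
  have nb2: "(cmod b)^2 = (\<rho>^2 - 2 * t * \<rho> * cos (p * a) + t^2) / t^2"
  proof -
    have "(cmod (w0 - t))^2 = (Re w0 - t)^2 + (Im w0)^2" by (simp add: cmod_power2)
    also have "\<dots> = (cmod w0)^2 - 2 * t * Re w0 + t^2"
      unfolding cmod_power2 by (simp add: power2_eq_square algebra_simps)
    finally have "(cmod (w0 - t))^2 = \<rho>^2 - 2 * t * \<rho> * cos (p * a) + t^2"
      unfolding nw0 Rew0 by simp
    then show ?thesis unfolding b_def using t0 by (simp add: norm_divide power_divide)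
  qed
  have b1: "cmod b < 1"
  proof -
    have "\<rho>^2 < 2 * t * \<rho> * cos (p * a)"
      using mult_strict_left_mono[OF small rho0] by (simp add: power2_eq_square mult_ac)
    then have "(cmod b)^2 < 1" unfolding nb2 using t0 by (simp add: divide_less_eq)
    then show ?thesis by (simp add: power_less_one_iff abs_square_less_1)
  qed
  define M where "M w = (w + b) / (1 + cnj b * w)" for w
  have M_eq: "M w = Moebius_function 0 (-b) w" for w
    unfolding M_def Moebius_function_def by simp
  have M1: "cmod (M w) < 1" if "cmod w < 1" for w
    unfolding M_eq by (rule Moebius_function_norm_lt_1) (use b1 that in auto)
  have den: "1 + cnj b * w \<noteq> 0" if "cmod w < 1" for w
  proof
    assume "1 + cnj b * w = 0"
    then have "cnj b * w = -1" by (simp add: add_eq_0_iff)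
    then have "cmod (cnj b * w) = 1" by simp
    moreover have "cmod (cnj b * w) < 1"
    proof -
      have "cmod (cnj b * w) = cmod b * cmod w" by (simp add: norm_mult)
      also have "\<dots> < 1 * 1" by (rule mult_strict_mono'[OF b1 that]) auto
      finally show ?thesis by simp
    qed
    ultimately show False by simp
  qed
  define h where "h w = t + t * M w" for w
  define hd where "hd w = t * (1 - b * cnj b) / (1 + cnj b * w)^2" for w
  have Dh: "(h has_field_derivative hd w) (at w)" if "cmod w < 1" for w
  proof -
    have d1: "((\<lambda>w. w + b) has_field_derivative 1) (at w)"
      by (auto intro!: derivative_eq_intros)
    have d2: "((\<lambda>w. 1 + cnj b * w) has_field_derivative cnj b) (at w)"
      by (auto intro!: derivative_eq_intros)
    have d3: "((\<lambda>w. (w + b) / (1 + cnj b * w)) has_field_derivative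
               (1 * (1 + cnj b * w) - (w + b) * cnj b) / ((1 + cnj b * w) * (1 + cnj b * w))) (at w)"
      by (rule DERIV_divide[OF d1 d2 den[OF that]])
    have d4: "((\<lambda>w. t + t * ((w + b) / (1 + cnj b * w))) has_field_derivative
               0 + t * ((1 * (1 + cnj b * w) - (w + b) * cnj b) / ((1 + cnj b * w) * (1 + cnj b * w)))) (at w)"
      by (rule DERIV_add[OF DERIV_const DERIV_cmult[OF d3]])
    show ?thesis unfolding h_def M_def hd_def
      by (rule DERIV_cong[OF d4]) (use den[OF that] in \<open>simp add: field_simps power2_eq_square\<close>)
  qed
  have hball: "cmod (h w - t) < t" if "cmod w < 1" for w
    using M1[OF that] t0 by (simp add: h_def norm_mult)
  have Reh: "Re (h w) > 0" if "cmod w < 1" for w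
  proof -
    have "\<bar>Re (h w - t)\<bar> < t" using abs_Re_le_cmod[of "h w - t"] hball[OF that] by linarith
    then show ?thesis by simp
  qed
  have nh: "cmod (h w) < 2 * t" if "cmod w < 1" for w
    using norm_triangle_ineq[of "h w - t" t] hball[OF that] t0 by simp
  define g where "g w = - exp (Ln (h w) / complex_of_real p)" for w
  have ImL: "\<bar>Im (Ln (h w) / complex_of_real p)\<bar> < \<theta>" if "cmod w < 1" for w
  proof -
    have "\<bar>Im (Ln (h w))\<bar> < pi / 2" by (rule Re_Ln_pos_lt_imp[OF Reh[OF that]])
    then have "\<bar>Im (Ln (h w))\<bar> / p < (pi / 2) / p" by (rule divide_strict_right_mono[OF _ p0])
    also have "(pi / 2) / p = \<theta>" using p th by simp
    finally show ?thesis using p0 by (simp add: abs_div)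
  qed
  have Lng: "Ln (- g w) = Ln (h w) / complex_of_real p" if "cmod w < 1" for w
    unfolding g_def minus_minus using ImL[OF that] th by (intro Ln_exp) arith+
  have gS: "g w \<in> trunc_sector \<theta> \<epsilon>" if "cmod w < 1" for w
  proof -
    have "g w \<in> sector \<theta>" using L3[OF th] Lng[OF that] ImL[OF that] by (simp add: g_def)
    moreover have "cmod (g w) < \<epsilon>"
    proof -
      have hne: "h w \<noteq> 0" using Reh[OF that] by auto
      then have h0: "cmod (h w) > 0" by simp
      have "cmod (g w) = exp (ln (cmod (h w)) / p)" using h0 by (simp add: g_def)
      also have "\<dots> < exp (ln (2 * t) / p)"
        using nh[OF that] h0 p0 t0 by (simp add: divide_strict_right_mono)
      also have "ln (2 * t) = p * ln \<epsilon>" proof - have "2 * t = exp (p * ln \<epsilon>)" using t e by (simp add: powr_def) then show ?thesis by simp qed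
      also have "exp (p * ln \<epsilon> / p) = \<epsilon>" using p0 e by simp
      finally show ?thesis .
    qed
    ultimately show ?thesis unfolding trunc_sector_def by (simp add: dist_norm)
  qed
  have h0: "h 0 = w0" unfolding h_def M_def b_def using t0 by simp
  have Lnw0: "Ln w0 = Complex (p * ln r) (p * a)"
    unfolding w0_def using pa by (intro Ln_exp) auto
  have g0: "g 0 = z"
  proof -
    have "Ln w0 / complex_of_real p = Complex (ln r) a" unfolding Lnw0 using p0 by (simp add: complex_eq_iff)
    then show ?thesis unfolding g_def h0 z using L1[OF r, of a] by (metis minus_minus)
  qed
  have Dg: "(g has_field_derivative (- exp (Ln (h w) / complex_of_real p) * (inverse (h w) * hd w / complex_of_real p))) (at w)"
    if "cmod w < 1" for w
  proof -
    have nn: "h w \<notin> \<real>\<^sub>\<le>\<^sub>0" using Reh[OF that] by (auto simp: complex_nonpos_Reals_iff)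
    have d1: "((\<lambda>w. Ln (h w)) has_field_derivative (inverse (h w) * hd w)) (at w)"
      by (rule DERIV_chain2[where f=Ln, OF has_field_derivative_Ln[OF nn] Dh[OF that]])
    have d2: "((\<lambda>w. Ln (h w) / complex_of_real p) has_field_derivative (inverse (h w) * hd w / complex_of_real p)) (at w)"
      using DERIV_cdivide[OF d1, of "complex_of_real p"] by simp
    show ?thesis unfolding g_def
      by (rule DERIV_cong[OF DERIV_minus[OF DERIV_chain2[OF DERIV_exp d2]]]) simp
  qed
  have hol: "g holomorphic_on ball 0 1"
    by (subst holomorphic_on_open) (auto intro!: exI Dg)
  have dg0: "deriv g 0 = - exp (Ln (h 0) / complex_of_real p) * (inverse (h 0) * hd 0 / complex_of_real p)"
    by (rule DERIV_imp_deriv[OF Dg]) simp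
  also have "\<dots> = z * (inverse w0 * hd 0 / complex_of_real p)"
    using g0 h0 unfolding g_def by simp
  finally have dg: "deriv g 0 = z * (inverse w0 * hd 0 / complex_of_real p)" .
  have hd0: "hd 0 = complex_of_real (t * (1 - (cmod b)^2))"
    unfolding hd_def by (simp add: complex_mult_cnj cmod_power2)
  have key: "t * (1 - (cmod b)^2) = 2 * \<rho> * cos (p * a) - \<rho>^2 / t"
    unfolding nb2 using t0 by (simp add: field_simps power2_eq_square)
  have pos: "t * (1 - (cmod b)^2) > 0"
  proof -
    have "(cmod b)^2 < 1" using b1 by (simp add: abs_square_less_1)
    then show ?thesis using t0 by simp
  qed
  have "cmod (deriv g 0) = cmod z * (inverse (cmod w0) * cmod (hd 0) / p)"
    unfolding dg using p0 by (simp add: norm_mult norm_divide norm_inverse)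
  also have "\<dots> = r * (inverse \<rho> * (t * (1 - (cmod b)^2)) / p)"
    unfolding hd0 L_pt(3)[OF th r a z] nw0 norm_of_real using pos by simp
  also have "inverse \<rho> * (t * (1 - (cmod b)^2)) = 2 * cos (p * a) - \<rho> / t"
    unfolding key using rho0 t0 by (simp add: field_simps power2_eq_square)
  also have "r * ((2 * cos (p * a) - \<rho> / t) / p) = r * (2 * cos (p * a) - \<rho> / t) / p" by simp
  finally have nd: "cmod (deriv g 0) = r * (2 * cos (p * a) - \<rho> / t) / p" .
  have "2 * cos (p * a) - \<rho> / t > 0" using small t0 by (simp add: field_simps)
  then have "deriv g 0 \<noteq> 0" using nd r p0 by auto
  with hol gS g0 nd show ?thesis by (intro exI[of _ g]) (auto simp: dist_norm)
qed



lemma L12: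
  assumes th: "0 < \<theta>" "\<theta> < pi" and r: "0 < r" "r < \<epsilon>" and a: "\<bar>a\<bar> < \<theta>" and e: "\<epsilon> > 0"
    and z: "z = complex_of_real r * exp (\<i> * complex_of_real (pi + a))"
    and p: "p = pi / (2 * \<theta>)" and t: "t = \<epsilon> powr p / 2" and rho: "\<rho> = r powr p"
    and small: "\<rho> < 2 * t * cos (p * a)"
  shows "(p / (2 * r * cos (p * a)))^2 \<le> Car_measure (trunc_sector \<theta> \<epsilon>) z"
    "Car_measure (trunc_sector \<theta> \<epsilon>) z \<le> EK_measure (trunc_sector \<theta> \<epsilon>) z"
    "EK_measure (trunc_sector \<theta> \<epsilon>) z \<le> (p / (r * (2 * cos (p * a) - \<rho> / t)))^2"
proof -
  define D where "D = trunc_sector \<theta> \<epsilon>"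
  have oD: "open D" unfolding D_def by (rule L_open_trunc[OF th])
  define CS where "CS = {(cmod (deriv f z))^2 | f. f holomorphic_on D \<and> f ` D \<subseteq> ball 0 1 \<and> f z = 0}"
  define ES where "ES = {(cmod (deriv f 0)) powi (-2) | f.
       f holomorphic_on ball 0 1 \<and> f ` ball 0 1 \<subseteq> D \<and> f 0 = z \<and> deriv f 0 \<noteq> 0}"
  have Car: "Car_measure D z = Sup CS" unfolding Car_measure_def CS_def ..
  have EK: "EK_measure D z = Inf ES" unfolding EK_measure_def ES_def ..
  obtain f where f: "f holomorphic_on D" "f ` D \<subseteq> ball 0 1" "f z = 0"
      "cmod (deriv f z) = p / (2 * r * cos (p * a))"
    using L9[OF th r a z p] unfolding D_def by blast
  obtain g where g: "g holomorphic_on ball 0 1" "g ` ball 0 1 \<subseteq> D" "g 0 = z" "deriv g 0 \<noteq> 0"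
      "cmod (deriv g 0) = r * (2 * cos (p * a) - \<rho> / t) / p"
    using L10[OF th r(1) a e z p t rho small] unfolding D_def by blast
  have fCS: "(p / (2 * r * cos (p * a)))^2 \<in> CS" unfolding CS_def using f by (metis (mono_tags, lifting) mem_Collect_eq)
  have gES: "(cmod (deriv g 0)) powi (-2) \<in> ES" unfolding ES_def using g(1-4) by blast
  have gval: "(cmod (deriv g 0)) powi (-2) = (p / (r * (2 * cos (p * a) - \<rho> / t)))^2"
    unfolding g(5) by (simp add: power_int_minus power2_eq_square field_simps)
  have comp: "x \<le> y" if xin: "x \<in> CS" and yin: "y \<in> ES" for x y
  proof -
    obtain f1 where f1: "x = (cmod (deriv f1 z))^2" "f1 holomorphic_on D" "f1 ` D \<subseteq> ball 0 1" "f1 z = 0"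
      using xin unfolding CS_def by blast
    obtain g1 where g1: "y = (cmod (deriv g1 0)) powi (-2)" "g1 holomorphic_on ball 0 1" "g1 ` ball 0 1 \<subseteq> D"
        "g1 0 = z" "deriv g1 0 \<noteq> 0"
      using yin unfolding ES_def by blast
    have le: "cmod (deriv f1 z) * cmod (deriv g1 0) \<le> 1" by (rule L11[OF oD f1(2-4) g1(2-4)])
    have pos: "cmod (deriv g1 0) > 0" using g1(5) by simp
    have "cmod (deriv f1 z) \<le> 1 / cmod (deriv g1 0)" using le pos by (simp add: le_divide_eq)
    then have "(cmod (deriv f1 z))^2 \<le> (1 / cmod (deriv g1 0))^2"
      by (rule power_mono) simp
    also have "\<dots> = (cmod (deriv g1 0)) powi (-2)" by (simp add: power_int_minus power_one_over divide_inverse power_inverse)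
    finally show ?thesis using f1(1) g1(1) by simp
  qed
  have CSne: "CS \<noteq> {}" using fCS by blast
  have ESne: "ES \<noteq> {}" using gES by blast
  have bddA: "bdd_above CS" unfolding bdd_above_def using comp gES by blast
  have bddB: "bdd_below ES"
  proof -
    have "0 \<le> y" if "y \<in> ES" for y using that unfolding ES_def by auto
    then show ?thesis unfolding bdd_below_def by blast
  qed
  show "(p / (2 * r * cos (p * a)))^2 \<le> Car_measure (trunc_sector \<theta> \<epsilon>) z"
    unfolding D_def[symmetric] Car by (rule cSup_upper[OF fCS bddA])
  show "Car_measure (trunc_sector \<theta> \<epsilon>) z \<le> EK_measure (trunc_sector \<theta> \<epsilon>) z"
    unfolding D_def[symmetric] Car EK
    by (rule cSup_least[OF CSne], rule cInf_greatest[OF ESne]) (rule comp)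
  show "EK_measure (trunc_sector \<theta> \<epsilon>) z \<le> (p / (r * (2 * cos (p * a) - \<rho> / t)))^2"
    unfolding D_def[symmetric] EK gval[symmetric] by (rule cInf_lower[OF gES bddB])
qed



lemma cos_pos_aux:
  assumes "0 < \<theta>" "\<theta> < pi" "\<bar>x\<bar> < \<theta>"
  shows "cos (pi / (2 * \<theta>) * x) > 0"
proof -
  have p0: "pi / (2 * \<theta>) > 0" using assms by simp
  have "\<bar>pi / (2 * \<theta>) * x\<bar> = pi / (2 * \<theta>) * \<bar>x\<bar>" using p0 assms(1) by (simp add: abs_mult)
  also have "\<dots> < pi / (2 * \<theta>) * \<theta>" by (rule mult_strict_left_mono[OF assms(3) p0])
  also have "\<dots> = pi / 2" using assms by simp
  finally have "\<bar>pi / (2 * \<theta>) * x\<bar> < pi / 2" .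
  then show ?thesis by (intro cos_gt_zero_pi) arith+
qed

lemma aux2:
  fixes p r X C :: real
  assumes "p \<noteq> 0" "r \<noteq> 0" "X \<noteq> 0" "C \<noteq> 0"
  shows "(p / (r * X)) / (p / (2 * r * C)) = 2 * C / X"
  using assms by (simp add: field_simps)

lemma L13:
  assumes th: "0 < \<theta>" "\<theta> < pi" and e: "\<epsilon> > 0"
    and r: "\<And>j. r j > 0" and a: "\<And>j. \<bar>a j\<bar> < \<theta>"
    and z: "\<And>j. z j = complex_of_real (r j) * exp (\<i> * complex_of_real (pi + a j))"
    and rlim: "r \<longlonglongrightarrow> 0" and alim: "a \<longlonglongrightarrow> \<alpha>" and al: "\<bar>\<alpha>\<bar> < \<theta>"
  shows "(\<lambda>j. Car_measure (trunc_sector \<theta> \<epsilon>) (z j) / (pi / (2 * \<theta>) / (2 * r j * cos (pi / (2 * \<theta>) * a j)))^2) \<longlonglongrightarrow> 1"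
    "(\<lambda>j. EK_measure (trunc_sector \<theta> \<epsilon>) (z j) / (pi / (2 * \<theta>) / (2 * r j * cos (pi / (2 * \<theta>) * a j)))^2) \<longlonglongrightarrow> 1"
proof -
  define p where "p = pi / (2 * \<theta>)"
  define t where "t = \<epsilon> powr p / 2"
  define \<rho> where "\<rho> j = r j powr p" for j
  define c where "c j = (p / (2 * r j * cos (p * a j)))^2" for j
  define U where "U j = (p / (r j * (2 * cos (p * a j) - \<rho> j / t)))^2" for j
  define q where "q j = (2 * cos (p * a j) / (2 * cos (p * a j) - \<rho> j / t))^2" for j
  have p0: "p > 0" using th p_def by simp
  have "\<epsilon> powr p > 0" using e by simp
  then have t0: "t > 0" unfolding t_def by linarith
  have cosal: "cos (p * \<alpha>) > 0" unfolding p_def by (rule cos_pos_aux[OF th al])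
  have cosa: "cos (p * a j) > 0" for j unfolding p_def by (rule cos_pos_aux[OF th a])
  have rholim: "\<rho> \<longlonglongrightarrow> 0" unfolding \<rho>_def
    by (rule tendsto_zero_powrI[OF rlim tendsto_const]) (use r p0 in \<open>auto intro: always_eventually less_imp_le\<close>)
  have coslim: "(\<lambda>j. cos (p * a j)) \<longlonglongrightarrow> cos (p * \<alpha>)" by (intro tendsto_intros alim)
  have "q \<longlonglongrightarrow> (2 * cos (p * \<alpha>) / (2 * cos (p * \<alpha>) - 0 / t))^2"
    unfolding q_def by (intro tendsto_intros coslim rholim) (use cosal t0 alim in auto)
  then have qlim: "q \<longlonglongrightarrow> 1" using cosal by simp
  have ev1: "eventually (\<lambda>j. r j < \<epsilon>) sequentially" using order_tendstoD(2)[OF rlim e] .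
  have "(\<lambda>j. 2 * t * cos (p * a j) - \<rho> j) \<longlonglongrightarrow> 2 * t * cos (p * \<alpha>) - 0"
    by (intro tendsto_intros coslim rholim)
  moreover have "2 * t * cos (p * \<alpha>) - 0 > 0" using t0 cosal by simp
  ultimately have "eventually (\<lambda>j. 2 * t * cos (p * a j) - \<rho> j > 0) sequentially"
    by (rule order_tendstoD(1))
  then have ev2: "eventually (\<lambda>j. \<rho> j < 2 * t * cos (p * a j)) sequentially" by simp
  have B: "eventually (\<lambda>j. c j \<le> Car_measure (trunc_sector \<theta> \<epsilon>) (z j) \<and>
      Car_measure (trunc_sector \<theta> \<epsilon>) (z j) \<le> EK_measure (trunc_sector \<theta> \<epsilon>) (z j) \<and>
      EK_measure (trunc_sector \<theta> \<epsilon>) (z j) \<le> U j) sequentially"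
    using ev1 ev2
  proof eventually_elim
    case (elim j)
    note L = L12[OF th r elim(1) a e z p_def t_def \<rho>_def elim(2)]
    show ?case using L unfolding c_def U_def by simp
  qed
  have c0: "c j > 0" for j unfolding c_def using p0 r[of j] cosa[of j] by simp
  have Uc: "U j / c j = q j" if "\<rho> j < 2 * t * cos (p * a j)" for j
  proof -
    have X: "2 * cos (p * a j) - \<rho> j / t > 0" using that t0 by (simp add: field_simps)
    have "U j / c j = ((p / (r j * (2 * cos (p * a j) - \<rho> j / t))) / (p / (2 * r j * cos (p * a j))))^2"
      unfolding U_def c_def by (rule power_divide[symmetric])
    also have "(p / (r j * (2 * cos (p * a j) - \<rho> j / t))) / (p / (2 * r j * cos (p * a j)))
        = 2 * cos (p * a j) / (2 * cos (p * a j) - \<rho> j / t)"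
      using X p0 r[of j] cosa[of j] by (intro aux2) auto
    finally show ?thesis unfolding q_def .
  qed
  have lowC: "eventually (\<lambda>j. 1 \<le> Car_measure (trunc_sector \<theta> \<epsilon>) (z j) / c j) sequentially"
    using B by eventually_elim (use c0 in \<open>simp add: le_divide_eq\<close>)
  have upC: "eventually (\<lambda>j. Car_measure (trunc_sector \<theta> \<epsilon>) (z j) / c j \<le> q j) sequentially"
    using B ev2
  proof eventually_elim
    case (elim j)
    have "Car_measure (trunc_sector \<theta> \<epsilon>) (z j) / c j \<le> U j / c j"
      using elim(1) c0[of j] by (intro divide_right_mono) auto
    then show ?case using Uc[OF elim(2)] by simp
  qed
  have lowE: "eventually (\<lambda>j. 1 \<le> EK_measure (trunc_sector \<theta> \<epsilon>) (z j) / c j) sequentially"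
    using B by eventually_elim (use c0 in \<open>simp add: le_divide_eq\<close>)
  have upE: "eventually (\<lambda>j. EK_measure (trunc_sector \<theta> \<epsilon>) (z j) / c j \<le> q j) sequentially"
    using B ev2
  proof eventually_elim
    case (elim j)
    have "EK_measure (trunc_sector \<theta> \<epsilon>) (z j) / c j \<le> U j / c j"
      using elim(1) c0[of j] by (intro divide_right_mono) auto
    then show ?case using Uc[OF elim(2)] by simp
  qed
  show "(\<lambda>j. Car_measure (trunc_sector \<theta> \<epsilon>) (z j) / (pi / (2 * \<theta>) / (2 * r j * cos (pi / (2 * \<theta>) * a j)))^2) \<longlonglongrightarrow> 1"
    using tendsto_sandwich[OF lowC upC tendsto_const qlim] unfolding c_def p_def .
  show "(\<lambda>j. EK_measure (trunc_sector \<theta> \<epsilon>) (z j) / (pi / (2 * \<theta>) / (2 * r j * cos (pi / (2 * \<theta>) * a j)))^2) \<longlonglongrightarrow> 1"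
    using tendsto_sandwich[OF lowE upE tendsto_const qlim] unfolding c_def p_def .
qed

lemma ratio_eq:
  fixes \<theta>1 \<theta>2 r x C1 C2 :: real
  assumes "\<theta>1 > 0" "\<theta>2 > 0" "r > 0" "C1 \<noteq> 0" "C2 \<noteq> 0"
  shows "(pi / (2 * \<theta>1) / (2 * r * C1))^2 / (pi / (2 * \<theta>2) / (2 * r * C2))^2 = ((\<theta>2 * C2) / (\<theta>1 * C1))^2"
  using assms by (simp add: field_simps power2_eq_square)

lemma quot_eq:
  fixes A B c1 c2 :: real
  assumes "c1 \<noteq> 0" "c2 \<noteq> 0"
  shows "A / B = (A / c1) / (B / c2) * (c1 / c2)"
  using assms by (cases "B = 0") (simp_all add: field_simps)



theorem lemma2p2:
  fixes \<theta>1 \<theta>2 \<alpha> \<epsilon>1 \<epsilon>2 :: real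
    and r a :: "nat \<Rightarrow> real" and z :: "nat \<Rightarrow> complex"
  assumes "0 < \<theta>1" "\<theta>1 < \<theta>2" "\<theta>2 < pi"
    and "\<And>j. r j > 0" "\<And>j. - \<theta>1 < a j \<and> a j < \<theta>1"
    and "\<And>j. z j = complex_of_real (r j) * exp (\<i> * complex_of_real (pi + a j))"
    and "z \<longlonglongrightarrow> 0" "a \<longlonglongrightarrow> \<alpha>" "\<bar>\<alpha>\<bar> < \<theta>1"
    and "\<epsilon>1 > 0" "\<epsilon>2 > 0"
  shows "((\<lambda>j. EK_measure (trunc_sector \<theta>1 \<epsilon>1) (z j) / EK_measure (trunc_sector \<theta>2 \<epsilon>2) (z j))
           \<longlonglongrightarrow> ((\<theta>2 * cos (\<alpha> * pi / (2 * \<theta>2))) / (\<theta>1 * cos (\<alpha> * pi / (2 * \<theta>1)))) ^ 2) \<and>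
         ((\<lambda>j. Car_measure (trunc_sector \<theta>1 \<epsilon>1) (z j) / Car_measure (trunc_sector \<theta>2 \<epsilon>2) (z j))
           \<longlonglongrightarrow> ((\<theta>2 * cos (\<alpha> * pi / (2 * \<theta>2))) / (\<theta>1 * cos (\<alpha> * pi / (2 * \<theta>1)))) ^ 2)"
proof -
  note th1 = assms(1) less_trans[OF assms(2,3)]
  have th2: "0 < \<theta>2" "\<theta>2 < pi" using assms(1-3) by linarith+
  have a1: "\<bar>a j\<bar> < \<theta>1" for j using assms(5)[of j] by arith
  have a2: "\<bar>a j\<bar> < \<theta>2" for j using a1[of j] assms(2) by arith
  have al2: "\<bar>\<alpha>\<bar> < \<theta>2" using assms(9,2) by arith
  have "(\<lambda>j. cmod (z j)) \<longlonglongrightarrow> 0" using tendsto_norm_zero[OF assms(7)] .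
  moreover have "cmod (z j) = r j" for j by (rule L_pt(3)[OF th1 assms(4) a1 assms(6)])
  ultimately have rlim: "r \<longlonglongrightarrow> 0" by simp
  define c1 where "c1 j = (pi / (2 * \<theta>1) / (2 * r j * cos (pi / (2 * \<theta>1) * a j)))^2" for j
  define c2 where "c2 j = (pi / (2 * \<theta>2) / (2 * r j * cos (pi / (2 * \<theta>2) * a j)))^2" for j
  note l1 = L13[OF th1 assms(10) assms(4) a1 assms(6) rlim assms(8,9), folded c1_def]
  note l2 = L13[OF th2 assms(11) assms(4) a2 assms(6) rlim assms(8) al2, folded c2_def]
  have cos1: "cos (pi / (2 * \<theta>1) * a j) > 0" for j by (rule cos_pos_aux[OF th1 a1])
  have cos2: "cos (pi / (2 * \<theta>2) * a j) > 0" for j by (rule cos_pos_aux[OF th2 a2])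
  have c1nz: "c1 j \<noteq> 0" for j unfolding c1_def using cos1[of j] assms(4)[of j] th1 by simp
  have c2nz: "c2 j \<noteq> 0" for j unfolding c2_def using cos2[of j] assms(4)[of j] th2 by simp
  define F where "F j = ((\<theta>2 * cos (a j * pi / (2 * \<theta>2))) / (\<theta>1 * cos (a j * pi / (2 * \<theta>1)))) ^ 2" for j
  define T where "T = ((\<theta>2 * cos (\<alpha> * pi / (2 * \<theta>2))) / (\<theta>1 * cos (\<alpha> * pi / (2 * \<theta>1)))) ^ 2"
  have cosal1: "cos (pi / (2 * \<theta>1) * \<alpha>) > 0" by (rule cos_pos_aux[OF th1 assms(9)])
  have eqa: "x * pi / (2 * \<theta>) = pi / (2 * \<theta>) * x" for x \<theta> :: real by simp
  have cosal1': "cos (\<alpha> * pi / (2 * \<theta>1)) > 0" using cosal1 by (simp only: eqa)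
  have nz: "\<theta>1 * cos (\<alpha> * pi / (2 * \<theta>1)) \<noteq> 0" using cosal1' th1 by simp
  have Flim: "F \<longlonglongrightarrow> T"
    unfolding F_def T_def by (intro tendsto_intros assms(8) nz) (use th1 th2 in auto)
  have cF: "c1 j / c2 j = F j" for j
    unfolding c1_def c2_def F_def eqa
    by (rule ratio_eq) (use th1 th2 assms(4)[of j] cos1[of j] cos2[of j] in auto)
  have EK: "(\<lambda>j. EK_measure (trunc_sector \<theta>1 \<epsilon>1) (z j) / EK_measure (trunc_sector \<theta>2 \<epsilon>2) (z j)) \<longlonglongrightarrow> T"
  proof -
    have "(\<lambda>j. (EK_measure (trunc_sector \<theta>1 \<epsilon>1) (z j) / c1 j) / (EK_measure (trunc_sector \<theta>2 \<epsilon>2) (z j) / c2 j) * F j)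
        \<longlonglongrightarrow> 1 / 1 * T"
      by (intro tendsto_mult tendsto_divide l1(2) l2(2) Flim) simp
    then show ?thesis using quot_eq[OF c1nz c2nz] by (simp add: cF[symmetric])
  qed
  have Car: "(\<lambda>j. Car_measure (trunc_sector \<theta>1 \<epsilon>1) (z j) / Car_measure (trunc_sector \<theta>2 \<epsilon>2) (z j)) \<longlonglongrightarrow> T"
  proof -
    have "(\<lambda>j. (Car_measure (trunc_sector \<theta>1 \<epsilon>1) (z j) / c1 j) / (Car_measure (trunc_sector \<theta>2 \<epsilon>2) (z j) / c2 j) * F j)
        \<longlonglongrightarrow> 1 / 1 * T"
      by (intro tendsto_mult tendsto_divide l1(1) l2(1) Flim) simp
    then show ?thesis using quot_eq[OF c1nz c2nz] by (simp add: cF[symmetric])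
  qed
  show ?thesis using EK Car unfolding T_def by blast
qed


end
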